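(* Let $d\geq 1$ and $r\geq 2$ be integers. Then $M(2r-1,r,d)\le d+1$.
   Context: All measures are probability measures on $\mathbb{R}^d$ absolutely continuous with respect to Lebesgue measure. A convex partition of $\mathbb{R}^d$ into $n$ parts is an ordered tuple $(K_1,\dots,K_n)$ of closed convex sets with union $\mathbb{R}^d$ and pairwise disjoint interiors (some parts may be empty). $M(n,r,d)$ is the largest integer $M$ such that for any $M$ measures $\mu_1,\dots,\mu_M$ on $\mathbb{R}^d$ there is a convex partition $(K_1,\dots,K_n)$ of $\mathbb{R}^d$ into $n$ parts and a map $\ell\colon[n]\to[r]$ with $\mu_j\big(\bigcup_{i\in\ell^{-1}(s)}K_i\big)=\tfrac1r$ for all $1\le j\le M$ and $1\le s\le r$. *)

theory Defs
  imports "HOL-Probability.Probability"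
begin

definition convex_partition :: "nat \<Rightarrow> (nat \<Rightarrow> 'a::euclidean_space set) \<Rightarrow> bool" where
  "convex_partition n K \<longleftrightarrow>
     (\<forall>i<n. closed (K i) \<and> convex (K i)) \<and>
     (\<Union>i<n. K i) = UNIV \<and>
     (\<forall>i<n. \<forall>j<n. i \<noteq> j \<longrightarrow> interior (K i) \<inter> interior (K j) = {})"

definition admissible_measure :: "'a::euclidean_space measure \<Rightarrow> bool" where
  "admissible_measure \<mu> \<longleftrightarrow>
     prob_space \<mu> \<and> sets \<mu> = sets lborel \<and> absolutely_continuous lborel \<mu>"

definition fair_split_prop :: "'a::euclidean_space itself \<Rightarrow> nat \<Rightarrow> nat \<Rightarrow> nat \<Rightarrow> bool" where
  "fair_split_prop _ n r m \<longleftrightarrow>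
     (\<forall>\<mu> :: nat \<Rightarrow> 'a measure. (\<forall>j<m. admissible_measure (\<mu> j)) \<longrightarrow>
        (\<exists>K lab. convex_partition n K \<and> (\<forall>i<n. lab i < r) \<and>
           (\<forall>j<m. \<forall>s<r. measure (\<mu> j) (\<Union>i\<in>{i. i < n \<and> lab i = s}. K i) = 1 / real r)))"

text \<open>M(n, r, d) with d = DIM('a).\<close>
definition M_num :: "'a::euclidean_space itself \<Rightarrow> nat \<Rightarrow> nat \<Rightarrow> nat" where
  "M_num T n r = (GREATEST m. fair_split_prop T n r m)"

end

theory Submission imports Defs begin
lemma term_bound:
  fixes \<alpha> t L :: real
  assumes "L \<le> t" "t \<le> L + 1"
  shows "\<alpha> * L - max (-\<alpha>) 0 \<le> \<alpha> * t"
proof (cases "\<alpha> \<ge> 0")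
  case True then show ?thesis using mult_left_mono[OF assms(1) True] by simp
next
  case False
  then have "\<alpha> * (L+1) \<le> \<alpha> * t" using assms(2) by (simp add: mult_left_mono_neg)
  then show ?thesis using False by (simp add: algebra_simps)
qed

lemma ineq_key:
  fixes a x qs :: "'a::euclidean_space" and q :: "'a \<Rightarrow> 'a" and N :: real
  assumes N: "N = 4 * real DIM('a)"
    and x: "\<forall>c\<in>Basis. 0 \<le> x \<bullet> c \<and> x \<bullet> c \<le> 1"
    and qb: "\<forall>b\<in>Basis. \<forall>c\<in>Basis. N * (b \<bullet> c) \<le> q b \<bullet> c \<and> q b \<bullet> c \<le> N * (b \<bullet> c) + 1"
    and qs: "\<forall>c\<in>Basis. -(N+1) \<le> qs \<bullet> c \<and> qs \<bullet> c \<le> -(N+1) + 1"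
    and lt: "\<forall>b\<in>Basis. a \<bullet> q b < a \<bullet> x" "a \<bullet> qs < a \<bullet> x"
  shows False
proof -
  define P where "P = (\<Sum>c\<in>Basis. max (a \<bullet> c) 0)"
  define Ng where "Ng = (\<Sum>c\<in>Basis. max (-(a \<bullet> c)) 0)"
  have P0: "P \<ge> 0" unfolding P_def by (intro sum_nonneg) auto
  have N0: "Ng \<ge> 0" unfolding Ng_def by (intro sum_nonneg) auto
  have ax: "a \<bullet> x \<le> P"
  proof -
    have "a \<bullet> x = (\<Sum>c\<in>Basis. (a \<bullet> c) * (x \<bullet> c))" by (rule euclidean_inner)
    also have "\<dots> \<le> P" unfolding P_def
    proof (intro sum_mono)
      fix c :: 'a assume c: "c \<in> Basis"
      show "(a \<bullet> c) * (x \<bullet> c) \<le> max (a \<bullet> c) 0"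
      proof (cases "a \<bullet> c \<ge> 0")
        case True then show ?thesis using x c mult_left_mono[of "x \<bullet> c" 1 "a \<bullet> c"] by auto
      next
        case False then show ?thesis using x c by (simp add: mult_nonpos_nonneg)
      qed
    qed
    finally show ?thesis .
  qed
  have qbb: "N * (a \<bullet> b) - Ng \<le> a \<bullet> q b" if b: "b \<in> Basis" for b
  proof -
    have ab: "a \<bullet> b = (\<Sum>c\<in>Basis. (a \<bullet> c) * (b \<bullet> c))" by (rule euclidean_inner)
    have "N * (a \<bullet> b) - Ng = (\<Sum>c\<in>Basis. (a \<bullet> c) * (N * (b \<bullet> c)) - max (-(a \<bullet> c)) 0)"
      by (simp add: Ng_def sum_subtractf ab sum_distrib_left algebra_simps)
    also have "\<dots> \<le> (\<Sum>c\<in>Basis. (a \<bullet> c) * (q b \<bullet> c))"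
      using qb b by (intro sum_mono term_bound) auto
    also have "\<dots> = a \<bullet> q b" by (rule euclidean_inner[symmetric])
    finally show ?thesis .
  qed
  have qss: "N * Ng - (N+1) * P \<le> a \<bullet> qs"
  proof -
    have eq: "\<And>c. (a \<bullet> c) * (-(N+1)) - max (-(a \<bullet> c)) 0 = N * max (-(a \<bullet> c)) 0 - (N+1) * max (a \<bullet> c) 0"
      by (simp add: max_def algebra_simps)
    have "N * Ng - (N+1) * P = (\<Sum>c\<in>Basis. N * max (-(a \<bullet> c)) 0 - (N+1) * max (a \<bullet> c) 0)"
      by (simp add: Ng_def P_def sum_subtractf sum_distrib_left)
    also have "\<dots> = (\<Sum>c\<in>Basis. (a \<bullet> c) * (-(N+1)) - max (-(a \<bullet> c)) 0)"
      by (rule sum.cong) (simp_all only: eq)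
    also have "\<dots> \<le> (\<Sum>c\<in>Basis. (a \<bullet> c) * (qs \<bullet> c))"
      using qs by (intro sum_mono term_bound) auto
    also have "\<dots> = a \<bullet> qs" by (rule euclidean_inner[symmetric])
    finally show ?thesis .
  qed
  have d1: "real DIM('a) \<ge> 1" by simp
  have Npos: "N > 0" using N d1 by simp
  have each: "max (a \<bullet> b) 0 \<le> (P + Ng) / N" if "b \<in> Basis" for b
  proof -
    have "N * (a \<bullet> b) < P + Ng" using qbb[OF that] lt(1) that ax by fastforce
    then have "a \<bullet> b < (P + Ng) / N" using Npos by (simp add: field_simps)
    moreover have "0 \<le> (P + Ng) / N" using P0 N0 Npos by simp
    ultimately show ?thesis by simp
  qed
  have "P \<le> (\<Sum>c\<in>(Basis::'a set). (P + Ng) / N)"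
    using sum_mono[of Basis "\<lambda>c. max (a \<bullet> c) 0" "\<lambda>c. (P + Ng) / N"] each
    by (simp add: P_def[symmetric])
  also have "\<dots> = real DIM('a) * (P + Ng) / N" by simp
  also have "\<dots> = (P + Ng) / 4" using N d1 by simp
  finally have h1: "3 * P \<le> Ng" by simp
  have h2: "N * Ng < (N + 2) * P" using qss lt(2) ax by (simp add: algebra_simps)
  have "(N + 2) * (3 * P) \<le> (N + 2) * Ng" using h1 Npos by (intro mult_left_mono) auto
  with h2 have "3 * N * Ng < (N + 2) * Ng" by (simp add: algebra_simps)
  then have "(2 * N - 2) * Ng < 0" by (simp add: algebra_simps)
  moreover have "2 * N - 2 \<ge> 0" using N d1 by linarith
  ultimately show False using N0 by (simp add: mult_less_0_iff)
qed


lemma unif_box: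
  fixes l u :: "'a::euclidean_space"
  assumes lu: "\<forall>b\<in>Basis. l \<bullet> b < u \<bullet> b"
  shows "measure lborel (cbox l u) > 0"
    and "admissible_measure (uniform_measure lborel (cbox l u))"
    and "B \<in> sets lborel \<Longrightarrow> measure (uniform_measure lborel (cbox l u)) B
           = measure lborel (cbox l u \<inter> B) / measure lborel (cbox l u)"
proof -
  show mp: "measure lborel (cbox l u) > 0"
    using lu by (auto simp: measure_lborel_cbox_eq less_imp_le inner_diff_left intro!: prod_pos)
  have fin: "emeasure lborel (cbox l u) \<noteq> \<infinity>" using emeasure_lborel_cbox_finite[of l u] by simp
  have ne: "emeasure lborel (cbox l u) \<noteq> 0"
    using mp fin by (simp add: emeasure_eq_ennreal_measure)
  show "admissible_measure (uniform_measure lborel (cbox l u))"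
    unfolding admissible_measure_def
  proof (intro conjI)
    show "prob_space (uniform_measure lborel (cbox l u))"
      using ne fin by (rule prob_space_uniform_measure)
    show "sets (uniform_measure lborel (cbox l u)) = sets lborel" by simp
    show "absolutely_continuous lborel (uniform_measure lborel (cbox l u))"
      unfolding uniform_measure_def by (rule absolutely_continuousI_density) simp
  qed
  show "B \<in> sets lborel \<Longrightarrow> measure (uniform_measure lborel (cbox l u)) B
           = measure lborel (cbox l u \<inter> B) / measure lborel (cbox l u)"
    using ne fin by simp
qed

lemma hit_box:
  fixes l u :: "'a::euclidean_space"
  assumes lu: "\<forall>b\<in>Basis. l \<bullet> b < u \<bullet> b" and A: "A \<in> sets lborel"
    and m: "measure (uniform_measure lborel (cbox l u)) A = 1 / real r" and r: "r \<ge> 1"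
  shows "cbox l u \<inter> A \<noteq> {}"
proof
  assume "cbox l u \<inter> A = {}"
  then have "measure (uniform_measure lborel (cbox l u)) A = 0"
    using unif_box(3)[OF lu A] by simp
  with m r show False by simp
qed

theorem mainTheorem4:
  fixes r :: nat
  assumes "r \<ge> 2"
  shows "M_num TYPE('a::euclidean_space) (2 * r - 1) r \<le> DIM('a) + 1"
proof -
  define d where "d = DIM('a)"
  define n where "n = 2 * r - 1"
  define N :: real where "N = 4 * real DIM('a)"
  define One :: 'a where "One = \<Sum>Basis"
  define C0 where "C0 = cbox 0 One"
  define Ob where "Ob b = cbox (N *\<^sub>R b) (N *\<^sub>R b + One)" for b :: 'a
  define Os where "Os = cbox (-(N+1) *\<^sub>R One) ((-(N+1)+1) *\<^sub>R One)"
  obtain f where f: "bij_betw f {0..<d} (Basis::'a set)"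
    using ex_bij_betw_nat_finite[of "Basis::'a set"] by (auto simp: d_def)
  define U where "U S = uniform_measure lborel S" for S :: "'a set"
  define \<mu> where "\<mu> j = (if j = 0 then U C0 else if j \<le> d then U (Ob (f (j-1)))
      else if j = d+1 then U Os else U C0)" for j
  have r1: "r \<ge> 1" using assms by simp
  have boxC0: "\<forall>b\<in>Basis. (0::'a) \<bullet> b < One \<bullet> b" by (simp add: One_def)
  have boxO: "\<forall>c\<in>Basis. (N *\<^sub>R b) \<bullet> c < (N *\<^sub>R b + One) \<bullet> c" for b
    by (simp add: One_def inner_add_left)
  have boxOs: "\<forall>c\<in>Basis. (-(N+1) *\<^sub>R One) \<bullet> c < ((-(N+1)+1) *\<^sub>R One) \<bullet> c"
    by (simp add: One_def)
  have adm: "admissible_measure (\<mu> j)" for j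
    unfolding \<mu>_def U_def C0_def Ob_def Os_def
    using unif_box(2)[OF boxC0] unif_box(2)[OF boxO] unif_box(2)[OF boxOs] by auto
  have P0: "fair_split_prop TYPE('a) n r 0"
  proof -
    have cp: "convex_partition n (\<lambda>i. if i = 0 then UNIV else ({}::'a set))"
      unfolding convex_partition_def using assms by (auto simp: n_def)
    have "\<forall>i<n. (0::nat) < r" using assms by simp
    then have "\<forall>i<n. (\<lambda>_. 0::nat) i < r" by simp
    with cp show ?thesis unfolding fair_split_prop_def by (intro allI impI exI conjI) auto
  qed
  have bound: "m \<le> d + 1" if fs: "fair_split_prop TYPE('a) n r m" for m
  proof (rule ccontr)
    assume "\<not> m \<le> d + 1"
    then have m: "d + 2 \<le> m" by simp
    from fs adm obtain K lab where part: "convex_partition n K" and lab: "\<forall>i<n. lab i < r"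
      and eq: "\<forall>j<m. \<forall>s<r. measure (\<mu> j) (\<Union>i\<in>{i. i < n \<and> lab i = s}. K i) = 1 / real r"
      unfolding fair_split_prop_def by blast
    have "\<exists>s<r. card {i. i < n \<and> lab i = s} \<le> 1"
    proof (rule ccontr)
      assume "\<not> (\<exists>s<r. card {i. i < n \<and> lab i = s} \<le> 1)"
      then have ge: "\<forall>s\<in>{..<r}. 2 \<le> card {i. i < n \<and> lab i = s}" by auto
      have un: "{..<n} = (\<Union>s\<in>{..<r}. {i. i < n \<and> lab i = s})" using lab by auto
      have "n = card (\<Union>s\<in>{..<r}. {i. i < n \<and> lab i = s})" using un by (metis card_lessThan)
      also have "\<dots> = (\<Sum>s\<in>{..<r}. card {i. i < n \<and> lab i = s})"
        by (rule card_UN_disjoint) auto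
      also have "\<dots> \<ge> (\<Sum>s\<in>{..<r}. 2)" using ge by (intro sum_mono) auto
      finally have "2 * r \<le> n" by simp
      then show False using assms by (simp add: n_def)
    qed
    then obtain s where s: "s < r" "card {i. i < n \<and> lab i = s} \<le> 1" by blast
    define I where "I = {i. i < n \<and> lab i = s}"
    have meq: "measure (\<mu> j) (\<Union>i\<in>I. K i) = 1 / real r" if "j \<le> d + 1" for j
      using eq s(1) m that unfolding I_def by auto
    have "I \<noteq> {}"
    proof
      assume "I = {}"
      then have "measure (\<mu> 0) (\<Union>i\<in>I. K i) = 0" by simp
      with meq[of 0] r1 show False by simp
    qed
    moreover have "finite I" unfolding I_def by simp
    ultimately have "card I \<noteq> 0" by simp
    moreover have "card I \<le> 1" using s(2) by (simp add: I_def)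
    ultimately have "card I = 1" by linarith
    then obtain i0 where i0: "I = {i0}" by (rule card_1_singletonE)
    have i0n: "i0 < n" using i0 unfolding I_def by auto
    define A where "A = K i0"
    have Acl: "closed A" and Acv: "convex A" using part i0n unfolding convex_partition_def A_def by auto
    have Ab: "A \<in> sets lborel" using Acl by simp
    have mA: "measure (\<mu> j) A = 1 / real r" if "j \<le> d + 1" for j
      using meq[OF that] i0 unfolding A_def by simp
    have hitO: "Ob b \<inter> A \<noteq> {}" if b: "b \<in> Basis" for b
    proof -
      obtain k where k: "k < d" "f k = b" using f b unfolding bij_betw_def by (metis atLeastLessThan_iff imageE)
      have "\<mu> (k+1) = U (Ob b)" using k unfolding \<mu>_def by simp
      then have "measure (uniform_measure lborel (Ob b)) A = 1 / real r"
        using mA[of "k+1"] k unfolding U_def by simp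
      then show ?thesis unfolding Ob_def using hit_box[OF boxO Ab _ r1] by blast
    qed
    then have "\<forall>b\<in>Basis. \<exists>y. y \<in> Ob b \<inter> A" by blast
    then obtain q where q: "\<forall>b\<in>Basis. q b \<in> Ob b \<inter> A" by metis
    have "\<mu> (d+1) = U Os" unfolding \<mu>_def by simp
    then have "measure (uniform_measure lborel Os) A = 1 / real r"
      using mA[of "d+1"] unfolding U_def by simp
    then have "Os \<inter> A \<noteq> {}" unfolding Os_def using hit_box[OF boxOs Ab _ r1] by blast
    then obtain qs where qs: "qs \<in> Os" "qs \<in> A" by blast
    have sub: "C0 \<subseteq> A"
    proof
      fix x assume x: "x \<in> C0"
      show "x \<in> A"
      proof (rule ccontr)
        assume "x \<notin> A"
        then obtain a \<beta> where ab: "a \<bullet> x < \<beta>" "\<forall>z\<in>A. a \<bullet> z > \<beta>"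
          using separating_hyperplane_closed_point[OF Acv Acl] by blast
        show False
        proof (rule ineq_key[OF N_def, of x q qs "-a"])
          show "\<forall>c\<in>Basis. 0 \<le> x \<bullet> c \<and> x \<bullet> c \<le> 1"
            using x unfolding C0_def mem_box by (simp add: One_def)
          show "\<forall>b\<in>Basis. \<forall>c\<in>Basis. N * (b \<bullet> c) \<le> q b \<bullet> c \<and> q b \<bullet> c \<le> N * (b \<bullet> c) + 1"
          proof (intro ballI)
            fix b c :: 'a assume b: "b \<in> Basis" and c: "c \<in> Basis"
            from q b have "q b \<in> cbox (N *\<^sub>R b) (N *\<^sub>R b + One)" by (simp add: Ob_def)
            then have "(N *\<^sub>R b) \<bullet> c \<le> q b \<bullet> c \<and> q b \<bullet> c \<le> (N *\<^sub>R b + One) \<bullet> c"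
              using c unfolding mem_box by blast
            then show "N * (b \<bullet> c) \<le> q b \<bullet> c \<and> q b \<bullet> c \<le> N * (b \<bullet> c) + 1"
              using c by (simp add: One_def inner_add_left)
          qed
          show "\<forall>c\<in>Basis. -(N+1) \<le> qs \<bullet> c \<and> qs \<bullet> c \<le> -(N+1) + 1"
            using qs(1) unfolding Os_def mem_box by (simp add: One_def)
          show "\<forall>b\<in>Basis. - a \<bullet> q b < - a \<bullet> x" using q ab by fastforce
          show "- a \<bullet> qs < - a \<bullet> x" using qs(2) ab by fastforce
        qed
      qed
    qed
    have "measure (\<mu> 0) A = measure lborel (C0 \<inter> A) / measure lborel C0"
      unfolding \<mu>_def U_def C0_def using unif_box(3)[OF boxC0 Ab] by simp
    also have "\<dots> = 1" using sub unif_box(1)[OF boxC0] unfolding C0_def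
      by (simp add: Int_absorb2)
    finally have "1 = 1 / real r" using mA[of 0] by simp
    then show False using assms by (simp add: field_simps)
  qed
  have "fair_split_prop TYPE('a) n r (Greatest (fair_split_prop TYPE('a) n r))"
    using GreatestI_nat[of "fair_split_prop TYPE('a) n r" 0 "d+1"] P0 bound by blast
  then have "Greatest (fair_split_prop TYPE('a) n r) \<le> d + 1" by (rule bound)
  then show ?thesis unfolding M_num_def n_def d_def .
qed

end
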